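(* Let $m\ge1$ and let $M$ be the $m\times m$ matrix with entries in $\mathbb{Q}[x,y,t]$ given by $M_{i,j}=\sum_{k=0}^{m}\binom{x-i}{k}\binom{y-j}{k}t^k$ for $1\le i,j\le m$. Then $$\frac{\det(M)}{t^{\binom{m}{2}}}=\sum_{k=0}^{m}\binom{x-m-1+k}{k}\binom{y-m-1+k}{k}t^k.$$
   Context: For a polynomial (or integer) $z$ and an integer $k\ge0$, $\binom{z}{k}=\frac{z(z-1)\cdots(z-k+1)}{k!}$. *)

theory Defs
  imports "HOL-Computational_Algebra.Polynomial" "Jordan_Normal_Form.Determinant"
begin

text \<open>The ring Q[x,y,t] is modelled as nested univariate polynomials
  rat poly poly poly: t is the innermost variable, y the middle one, x the outermost.\<close>

type_synonym qxyt = "rat poly poly poly"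

definition varX :: qxyt where "varX = monom 1 1"
definition varY :: qxyt where "varY = [: monom 1 1 :]"
definition varT :: qxyt where "varT = [: [: monom 1 1 :] :]"

definition constQ :: "rat \<Rightarrow> qxyt" where "constQ c = [: [: [: c :] :] :]"

text \<open>Binomial coefficient of a polynomial: binom z k = z(z-1)...(z-k+1)/k!.
  (The library's gchoose is syntactically restricted to fields here.)\<close>
definition pbinom :: "qxyt \<Rightarrow> nat \<Rightarrow> qxyt" where
  "pbinom z k = constQ (1 / fact k) * (\<Prod>i<k. z - of_nat i)"

text \<open>The m x m matrix M with M_{i,j} for 1 <= i,j <= m, stored 0-based
  (0-based row index i corresponds to the paper's i+1).\<close>
definition matM :: "nat \<Rightarrow> qxyt mat" where
  "matM m = mat m m (\<lambda>(i, j). \<Sum>k = 0..m.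
      pbinom (varX - of_nat (i + 1)) k * pbinom (varY - of_nat (j + 1)) k * varT ^ k)"

end

theory Submission
  imports Defs "HOL-Computational_Algebra.Fraction_Field" "HOL-Computational_Algebra.Formal_Power_Series"
begin

lemma rank_one_det:
  fixes a b :: "nat \<Rightarrow> 'a :: field"
  shows "det (1\<^sub>m n + mat n n (\<lambda>(i,j). a i * b j)) = 1 + (\<Sum>i<n. a i * b i)"
proof -
  define X where "X = mat n 1 (\<lambda>(i,_). a i)"
  define Yr where "Yr = mat 1 n (\<lambda>(_,j). b j)"
  have X: "X \<in> carrier_mat n 1" and Yr: "Yr \<in> carrier_mat 1 n" by (auto simp: X_def Yr_def)
  have XY: "X * Yr = mat n n (\<lambda>(i,j). a i * b j)"
    by (rule eq_matI) (auto simp: X_def Yr_def scalar_prod_def)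
  have YX: "Yr * X = mat 1 1 (\<lambda>_. \<Sum>i<n. a i * b i)"
    by (rule eq_matI) (auto simp: X_def Yr_def scalar_prod_def atLeast0LessThan mult.commute)
  define L where "L = four_block_mat (1\<^sub>m n) (0\<^sub>m n 1) (-Yr) (1\<^sub>m 1)"
  define U1 where "U1 = four_block_mat (1\<^sub>m n) X (0\<^sub>m 1 n) (1\<^sub>m 1 + Yr * X)"
  define U2 where "U2 = four_block_mat (1\<^sub>m n + X * Yr) X (0\<^sub>m 1 n) (1\<^sub>m 1)"
  have cL: "L \<in> carrier_mat (n+1) (n+1)" unfolding L_def
    by (rule four_block_carrier_mat) (use Yr in auto)
  have cU1: "U1 \<in> carrier_mat (n+1) (n+1)" unfolding U1_def
    by (rule four_block_carrier_mat) (use Yr X in auto)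
  have cU2: "U2 \<in> carrier_mat (n+1) (n+1)" unfolding U2_def
    by (rule four_block_carrier_mat) (use Yr X in auto)
  have "L * U1 = four_block_mat (1\<^sub>m n * 1\<^sub>m n + 0\<^sub>m n 1 * 0\<^sub>m 1 n) (1\<^sub>m n * X + 0\<^sub>m n 1 * (1\<^sub>m 1 + Yr * X))
       (-Yr * 1\<^sub>m n + 1\<^sub>m 1 * 0\<^sub>m 1 n) (-Yr * X + 1\<^sub>m 1 * (1\<^sub>m 1 + Yr * X))"
    unfolding L_def U1_def by (rule mult_four_block_mat) (use X Yr in auto)
  also have "\<dots> = four_block_mat (1\<^sub>m n) X (-Yr) (1\<^sub>m 1)"
    by (rule cong_four_block_mat; rule eq_matI) (auto simp: X_def Yr_def scalar_prod_def)
  finally have e1: "L * U1 = four_block_mat (1\<^sub>m n) X (-Yr) (1\<^sub>m 1)" .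
  have "U2 * L = four_block_mat ((1\<^sub>m n + X * Yr) * 1\<^sub>m n + X * (-Yr)) ((1\<^sub>m n + X * Yr) * 0\<^sub>m n 1 + X * 1\<^sub>m 1)
       (0\<^sub>m 1 n * 1\<^sub>m n + 1\<^sub>m 1 * (-Yr)) (0\<^sub>m 1 n * 0\<^sub>m n 1 + 1\<^sub>m 1 * 1\<^sub>m 1)"
    unfolding L_def U2_def by (rule mult_four_block_mat) (use X Yr in auto)
  also have "\<dots> = four_block_mat (1\<^sub>m n) X (-Yr) (1\<^sub>m 1)"
    by (rule cong_four_block_mat; rule eq_matI) (auto simp: X_def Yr_def scalar_prod_def)
  finally have e2: "U2 * L = four_block_mat (1\<^sub>m n) X (-Yr) (1\<^sub>m 1)" .
  have dL: "det L = 1" unfolding L_def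
    by (subst det_four_block_mat_upper_right_zero[of _ n _ 1]) (use Yr in auto)
  have dU1: "det U1 = 1 + (\<Sum>i<n. a i * b i)" unfolding U1_def
    by (subst det_four_block_mat_lower_left_zero[of _ n _ 1]) (use Yr X in \<open>auto simp: YX det_single\<close>)
  have dU2: "det U2 = det (1\<^sub>m n + X * Yr)" unfolding U2_def
    by (subst det_four_block_mat_lower_left_zero[of _ n _ 1]) (use Yr X in auto)
  have "det L * det U1 = det U2 * det L"
    using e1 e2 det_mult[OF cL cU1] det_mult[OF cU2 cL] by simp
  then show ?thesis using dL dU1 dU2 XY by simp
qed

lemma diag_rank_one_det:
  fixes d x y :: "nat \<Rightarrow> 'a::field"
  assumes d: "\<And>i. i < n \<Longrightarrow> d i \<noteq> 0"
  shows "det (mat n n (\<lambda>(i,j). (if i = j then d i else 0) + x i * y j))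
       = (\<Prod>i<n. d i) * (1 + (\<Sum>i<n. x i / d i * y i))"
proof -
  define Dg where "Dg = mat n n (\<lambda>(i,j). if i = j then d i else 0)"
  define N where "N = 1\<^sub>m n + mat n n (\<lambda>(i,j). (x i / d i) * y j)"
  have sd: "(\<Sum>k\<in>{0..<n}. (if i = k then d i else 0) * g k) = d i * g i" if "i < n" for i and g :: "nat \<Rightarrow> 'a"
  proof -
    have "(\<Sum>k\<in>{0..<n}. (if i = k then d i else 0) * g k) = (\<Sum>k\<in>{0..<n}. if i = k then d i * g k else 0)"
      by (rule sum.cong) auto
    also have "\<dots> = d i * g i" using that by (simp add: sum.delta)
    finally show ?thesis .
  qed
  have "mat n n (\<lambda>(i,j). (if i = j then d i else 0) + x i * y j) = Dg * N"
  proof (rule eq_matI)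
    fix i j assume ij: "i < dim_row (Dg * N)" "j < dim_col (Dg * N)"
    then have i: "i < n" and j: "j < n" by (auto simp: Dg_def N_def)
    have "(Dg * N) $$ (i,j) = (\<Sum>k\<in>{0..<n}. (if i = k then d i else 0) * ((if k = j then 1 else 0) + x k / d k * y j))"
      using i j by (simp add: Dg_def N_def scalar_prod_def)
    also have "\<dots> = d i * ((if i = j then 1 else 0) + x i / d i * y j)" by (rule sd[OF i])
    also have "\<dots> = (if i = j then d i else 0) + x i * y j" using d[OF i] by (simp add: field_simps)
    finally show "mat n n (\<lambda>(i,j). (if i = j then d i else 0) + x i * y j) $$ (i, j) = (Dg * N) $$ (i, j)"
      using i j by simp
  qed (auto simp: Dg_def N_def)
  moreover have "det Dg = (\<Prod>i<n. d i)"
    by (subst det_upper_triangular[of _ n]) (auto simp: Dg_def upper_triangular_def prod_list_diag_prod atLeast0LessThan)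
  moreover have "det N = 1 + (\<Sum>i<n. x i / d i * y i)"
    unfolding N_def by (rule rank_one_det)
  moreover have "Dg \<in> carrier_mat n n" "N \<in> carrier_mat n n" by (auto simp: Dg_def N_def)
  ultimately show ?thesis by (simp add: det_mult)
qed

lemma sum_if_ge: "(\<Sum>j\<in>{0..<m::nat}. if s \<le> j then g j else 0) = (\<Sum>j\<in>{s..<m}. g j)"
proof -
  have "(\<Sum>j\<in>{0..<m}. if s \<le> j then g j else 0) = (\<Sum>j\<in>{j\<in>{0..<m}. s \<le> j}. g j)"
    by (rule sum.inter_filter[symmetric]) simp
  also have "{j\<in>{0..<m}. s \<le> j} = {s..<m}" by auto
  finally show ?thesis .
qed

lemma K1:
  fixes u :: "'a::field_char_0"
  assumes "s < m"
  shows "(\<Sum>j\<in>{s..<m}. (u gchoose (j - s)) * ((-u) gchoose (m - j))) = - (u gchoose (m - s))"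
proof -
  define n where "n = m - s"
  have n: "n \<ge> 1" "m = n + s" using assms by (auto simp: n_def)
  have "(\<Sum>j\<in>{s..<m}. (u gchoose (j - s)) * ((-u) gchoose (m - j)))
      = (\<Sum>i\<in>{0..<n}. (u gchoose i) * ((-u) gchoose (n - i)))"
    using sum.shift_bounds_nat_ivl[of "\<lambda>j. (u gchoose (j - s)) * ((-u) gchoose (m - j))" 0 s n]
    by (simp add: n add.commute)
  moreover have "(\<Sum>i\<in>{0..n}. (u gchoose i) * ((-u) gchoose (n - i))) = 0"
    using gbinomial_Vandermonde[of u "-u" n] n by (cases n) auto
  moreover have "(\<Sum>i\<in>{0..n}. (u gchoose i) * ((-u) gchoose (n - i)))
      = (\<Sum>i\<in>{0..<n}. (u gchoose i) * ((-u) gchoose (n - i))) + (u gchoose n)"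
    by (simp add: atLeastLessThanSuc_atLeastAtMost[symmetric])
  ultimately show ?thesis using n_def by (simp add: eq_neg_iff_add_eq_0 add.commute)
qed

definition T0 :: "'a::field_char_0 \<Rightarrow> nat \<Rightarrow> 'a mat" where
  "T0 u m = mat m m (\<lambda>(s,k). if s \<le> k then u gchoose (k - s) else 0)"
definition Em :: "'a::field_char_0 \<Rightarrow> nat \<Rightarrow> 'a mat" where
  "Em u m = mat m (Suc m) (\<lambda>(j,k). if k < m then (if j = k then 1 else 0) else - ((-u) gchoose (m - j)))"
definition Te :: "'a::field_char_0 \<Rightarrow> nat \<Rightarrow> 'a mat" where
  "Te u m = mat m (Suc m) (\<lambda>(s,k). if s \<le> k then u gchoose (k - s) else 0)"
definition Pm :: "nat \<Rightarrow> 'a::field_char_0 mat" where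
  "Pm m = mat m m (\<lambda>(p,s). of_nat (p choose s))"
definition Jm :: "nat \<Rightarrow> 'a::field_char_0 mat" where
  "Jm m = mat m m (\<lambda>(i,p). if p = m - 1 - i then 1 else 0)"
definition Am :: "'a::field_char_0 \<Rightarrow> nat \<Rightarrow> 'a mat" where
  "Am u m = mat m (Suc m) (\<lambda>(i,k). (u + of_nat (m - 1 - i)) gchoose k)"
definition Dm :: "'a::field_char_0 \<Rightarrow> nat \<Rightarrow> 'a mat" where
  "Dm T m = mat (Suc m) (Suc m) (\<lambda>(i,j). if i = j then T ^ i else 0)"

lemma S1: "T0 u m * Em u m = Te u m"
proof (rule eq_matI)
  fix s k assume "s < dim_row (Te u m)" "k < dim_col (Te u m)"
  then have s: "s < m" and k: "k < Suc m" by (auto simp: Te_def)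
  have "(T0 u m * Em u m) $$ (s,k) = (\<Sum>j\<in>{0..<m}. (if s \<le> j then u gchoose (j - s) else 0) *
        (if k < m then (if j = k then 1 else 0) else - ((-u) gchoose (m - j))))"
    using s k by (simp add: T0_def Em_def scalar_prod_def)
  also have "\<dots> = Te u m $$ (s,k)"
  proof (cases "k < m")
    case True
    have "(\<Sum>j\<in>{0..<m}. (if s \<le> j then u gchoose (j - s) else 0) *
        (if k < m then (if j = k then 1 else 0) else - ((-u) gchoose (m - j))))
       = (\<Sum>j\<in>{0..<m}. if j = k then (if s \<le> k then u gchoose (k - s) else 0) else 0)"
      using True by (intro sum.cong) auto
    also have "\<dots> = Te u m $$ (s,k)" using True s by (simp add: Te_def)
    finally show ?thesis .
  next
    case False
    then have km: "k = m" using k by auto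
    have "(\<Sum>j\<in>{0..<m}. (if s \<le> j then u gchoose (j - s) else 0) *
        (if k < m then (if j = k then 1 else 0) else - ((-u) gchoose (m - j))))
       = (\<Sum>j\<in>{0..<m}. if s \<le> j then - ((u gchoose (j - s)) * ((-u) gchoose (m - j))) else 0)"
      using km by (intro sum.cong) auto
    also have "\<dots> = - (\<Sum>j\<in>{s..<m}. (u gchoose (j - s)) * ((-u) gchoose (m - j)))"
      by (simp add: sum_if_ge sum_negf)
    also have "\<dots> = u gchoose (m - s)" using K1[OF s, of u] by simp
    finally show ?thesis using km s by (simp add: Te_def)
  qed
  finally show "(T0 u m * Em u m) $$ (s, k) = Te u m $$ (s, k)" .
qed (auto simp: Te_def T0_def Em_def)

lemma S2:
  fixes u :: "'a::field_char_0"
  shows "Pm m * Te u m = mat m (Suc m) (\<lambda>(p,k). (u + of_nat p) gchoose k)"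
proof (rule eq_matI)
  fix p k assume "p < dim_row (mat m (Suc m) (\<lambda>(p,k). (u + of_nat p) gchoose k))"
    "k < dim_col (mat m (Suc m) (\<lambda>(p,k). (u + of_nat p) gchoose k))"
  then have p: "p < m" and k: "k < Suc m" by auto
  define f where "f s = of_nat (p choose s) * (u gchoose (k - s))" for s
  have "(Pm m * Te u m) $$ (p,k) = (\<Sum>s\<in>{0..<m}. of_nat (p choose s) * (if s \<le> k then u gchoose (k - s) else 0))"
    using p k by (simp add: Pm_def Te_def scalar_prod_def)
  also have "\<dots> = (\<Sum>s\<in>{0..<m}. if s \<le> k then f s else 0)"
    by (intro sum.cong) (auto simp: f_def)
  also have "\<dots> = (\<Sum>s\<in>{0..min p k}. f s)"
  proof -
    have "(\<Sum>s\<in>{0..<m}. if s \<le> k then f s else 0) = (\<Sum>s\<in>{0..min p k}. if s \<le> k then f s else 0)"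
      by (rule sum.mono_neutral_right) (use p in \<open>auto simp: f_def\<close>)
    also have "\<dots> = (\<Sum>s\<in>{0..min p k}. f s)" by (intro sum.cong) auto
    finally show ?thesis .
  qed
  also have "\<dots> = (\<Sum>s\<in>{0..k}. f s)"
    by (rule sum.mono_neutral_left) (auto simp: f_def)
  also have "\<dots> = (\<Sum>s\<in>{0..k}. (of_nat p gchoose s) * (u gchoose (k - s)))"
    by (simp add: f_def binomial_gbinomial)
  also have "\<dots> = (of_nat p + u) gchoose k" by (rule gbinomial_Vandermonde)
  finally show "(Pm m * Te u m) $$ (p,k) = mat m (Suc m) (\<lambda>(p,k). (u + of_nat p) gchoose k) $$ (p,k)"
    using p k by (simp add: add.commute)
qed (auto simp: Pm_def Te_def)

lemma S3:
  assumes R: "R \<in> carrier_mat m nc"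
  shows "(Jm m :: 'a::field_char_0 mat) * R = mat m nc (\<lambda>(i,k). R $$ (m - 1 - i, k))"
proof (rule eq_matI)
  fix i k assume "i < dim_row (mat m nc (\<lambda>(i,k). R $$ (m - 1 - i, k)))"
    "k < dim_col (mat m nc (\<lambda>(i,k). R $$ (m - 1 - i, k)))"
  then have i: "i < m" and k: "k < nc" by auto
  have "(Jm m * R) $$ (i,k) = (\<Sum>p\<in>{0..<m}. (if p = m - 1 - i then 1 else 0) * R $$ (p,k))"
    using i k R by (simp add: Jm_def scalar_prod_def)
  also have "\<dots> = (\<Sum>p\<in>{0..<m}. if p = m - 1 - i then R $$ (p,k) else 0)"
    by (intro sum.cong) auto
  also have "\<dots> = R $$ (m - 1 - i, k)" using i by simp
  finally show "(Jm m * R) $$ (i,k) = mat m nc (\<lambda>(i,k). R $$ (m - 1 - i, k)) $$ (i,k)"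
    using i k by simp
qed (use R in \<open>auto simp: Jm_def\<close>)

lemma Am_decomp:
  fixes u :: "'a::field_char_0"
  shows "Am u m = Jm m * (Pm m * (T0 u m * Em u m))"
proof -
  have e: "Pm m * (T0 u m * Em u m) = mat m (Suc m) (\<lambda>(p,k). (u + of_nat p) gchoose k)"
    by (simp add: S1 S2)
  have c: "mat m (Suc m) (\<lambda>(p,k). (u + of_nat p) gchoose k) \<in> carrier_mat m (Suc m)"
    by auto
  show ?thesis
    unfolding e S3[OF c]
    by (rule eq_matI) (auto simp: Am_def)
qed

lemma AD: 
  fixes A :: "'a::field_char_0 mat"
  assumes "A \<in> carrier_mat n (Suc m)"
  shows "A * Dm T m = mat n (Suc m) (\<lambda>(i,k). A $$ (i,k) * T ^ k)"
proof (rule eq_matI)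
  fix i k assume "i < dim_row (mat n (Suc m) (\<lambda>(i,k). A $$ (i,k) * T ^ k))"
    "k < dim_col (mat n (Suc m) (\<lambda>(i,k). A $$ (i,k) * T ^ k))"
  then have i: "i < n" and k: "k < Suc m" by auto
  have "(A * Dm T m) $$ (i,k) = (\<Sum>l\<in>{0..<Suc m}. A $$ (i,l) * (if l = k then T ^ l else 0))"
    using i k assms by (simp add: Dm_def scalar_prod_def)
  also have "\<dots> = (\<Sum>l\<in>{0..<Suc m}. if l = k then A $$ (i,k) * T ^ k else 0)"
    by (intro sum.cong) auto
  also have "\<dots> = A $$ (i,k) * T ^ k" using k by simp
  finally show "(A * Dm T m) $$ (i,k) = mat n (Suc m) (\<lambda>(i,k). A $$ (i,k) * T ^ k) $$ (i,k)"
    using i k by simp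
qed (use assms in \<open>auto simp: Dm_def\<close>)

lemma ADB:
  fixes A B :: "'a::field_char_0 mat"
  assumes A: "A \<in> carrier_mat n (Suc m)" and B: "B \<in> carrier_mat n' (Suc m)"
  shows "A * Dm T m * transpose_mat B = mat n n' (\<lambda>(i,j). \<Sum>k\<in>{0..<Suc m}. A $$ (i,k) * T ^ k * B $$ (j,k))"
  unfolding AD[OF A]
  by (rule eq_matI) (use A B in \<open>auto simp: scalar_prod_def\<close>)

lemma G_eq:
  fixes u v T :: "'a::field_char_0"
  shows "Em u m * Dm T m * transpose_mat (Em v m) =
    mat m m (\<lambda>(p,q). (if p = q then T ^ p else 0) + T ^ m * (- ((-u) gchoose (m - p))) * (- ((-v) gchoose (m - q))))"
proof -
  have c: "Em u m \<in> carrier_mat m (Suc m)" "Em v m \<in> carrier_mat m (Suc m)" by (auto simp: Em_def)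
  show ?thesis unfolding ADB[OF c]
  proof (rule eq_matI)
    fix p q assume "p < dim_row (mat m m (\<lambda>(p,q). (if p = q then T ^ p else 0) + T ^ m * (- ((-u) gchoose (m - p))) * (- ((-v) gchoose (m - q)))))"
      "q < dim_col (mat m m (\<lambda>(p,q). (if p = q then T ^ p else 0) + T ^ m * (- ((-u) gchoose (m - p))) * (- ((-v) gchoose (m - q)))))"
    then have p: "p < m" and q: "q < m" by auto
    have "(\<Sum>k\<in>{0..<Suc m}. Em u m $$ (p, k) * T ^ k * Em v m $$ (q, k))
       = (\<Sum>k\<in>{0..<m}. Em u m $$ (p, k) * T ^ k * Em v m $$ (q, k)) + Em u m $$ (p, m) * T ^ m * Em v m $$ (q, m)"
      by simp
    also have "(\<Sum>k\<in>{0..<m}. Em u m $$ (p, k) * T ^ k * Em v m $$ (q, k))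
       = (\<Sum>k\<in>{0..<m}. if k = p then (if p = q then T ^ p else 0) else 0)"
      using p q by (intro sum.cong) (auto simp: Em_def)
    also have "\<dots> = (if p = q then T ^ p else 0)" using p by simp
    also have "Em u m $$ (p, m) * T ^ m * Em v m $$ (q, m) = T ^ m * (- ((-u) gchoose (m - p))) * (- ((-v) gchoose (m - q)))"
      using p q by (simp add: Em_def)
    finally show "mat m m (\<lambda>(i, j). \<Sum>k = 0..<Suc m. Em u m $$ (i, k) * T ^ k * Em v m $$ (j, k)) $$ (p, q) =
         mat m m (\<lambda>(p,q). (if p = q then T ^ p else 0) + T ^ m * (- ((-u) gchoose (m - p))) * (- ((-v) gchoose (m - q)))) $$ (p, q)"
      using p q by simp
  qed auto
qed

lemma det_Pm: "det (Pm m :: 'a::field_char_0 mat) = 1"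
  by (subst det_lower_triangular[of m]) (auto simp: Pm_def prod_list_diag_prod)

lemma det_T0: "det (T0 u m) = 1"
  by (subst det_upper_triangular[of _ m]) (auto simp: T0_def upper_triangular_def prod_list_diag_prod)

lemma det_Jm: "det (Jm m :: 'a::field_char_0 mat) * det (Jm m) = 1"
proof -
  have c: "(Jm m :: 'a mat) \<in> carrier_mat m m" by (auto simp: Jm_def)
  have cT: "transpose_mat (Jm m :: 'a mat) \<in> carrier_mat m m" using c by simp
  have "(Jm m :: 'a mat) * transpose_mat (Jm m) = 1\<^sub>m m"
    unfolding S3[OF cT]
    by (rule eq_matI) (auto simp: Jm_def)
  then have "det ((Jm m :: 'a mat) * transpose_mat (Jm m)) = 1" by simp
  then show ?thesis using det_mult[OF c cT] det_transpose[OF c] by simp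
qed

lemma reassoc:
  fixes Q E D Q' E' :: "'a::field_char_0 mat"
  assumes Q: "Q \<in> carrier_mat m m" and E: "E \<in> carrier_mat m n" and D: "D \<in> carrier_mat n n"
    and Q': "Q' \<in> carrier_mat m m" and E': "E' \<in> carrier_mat m n"
  shows "(Q * E) * D * transpose_mat (Q' * E') = Q * (E * D * transpose_mat E') * transpose_mat Q'"
proof -
  have t: "transpose_mat (Q' * E') = transpose_mat E' * transpose_mat Q'"
    by (rule transpose_mult[OF Q' E'])
  have cE'T: "transpose_mat E' \<in> carrier_mat n m" using E' by simp
  have cQ'T: "transpose_mat Q' \<in> carrier_mat m m" using Q' by simp
  have cED: "E * D \<in> carrier_mat m n" using E D by (rule mult_carrier_mat)
  have cQED: "Q * (E * D) \<in> carrier_mat m n" using Q cED by (rule mult_carrier_mat)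
  have a1: "(Q * E) * D = Q * (E * D)" using Q E D by (rule assoc_mult_mat)
  have a2: "Q * (E * D) * (transpose_mat E' * transpose_mat Q') = (Q * (E * D) * transpose_mat E') * transpose_mat Q'"
    using assoc_mult_mat[OF cQED cE'T cQ'T] by simp
  have a3: "Q * (E * D) * transpose_mat E' = Q * (E * D * transpose_mat E')"
    using assoc_mult_mat[OF Q cED cE'T] by simp
  show ?thesis unfolding t a1 a2 a3 ..
qed

lemma sum_lt_choose2: "(\<Sum>i<m. i) = m choose 2"
proof (induction m)
  case (Suc m)
  have "Suc m choose 2 = (m choose 1) + (m choose 2)"
    by (simp add: numeral_2_eq_2)
  then show ?case using Suc by simp
qed simp

lemma shift_arg: "i < m \<Longrightarrow> (X::'a::field_char_0) - of_nat m + of_nat (m - 1 - i) = X - of_nat (i + 1)"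
proof -
  assume i: "i < m"
  then have "m - 1 - i = m - (i + 1)" by simp
  then have "of_nat (m - 1 - i) = (of_nat m :: 'a) - of_nat (i + 1)" using i by (simp add: of_nat_diff)
  then show ?thesis by simp
qed

theorem core:
  fixes X Y T :: "'a::field_char_0"
  assumes T: "T \<noteq> 0"
  shows "det (mat m m (\<lambda>(i,j). \<Sum>k = 0..m. ((X - of_nat (i+1)) gchoose k) * ((Y - of_nat (j+1)) gchoose k) * T ^ k))
    = T ^ (m choose 2) * (\<Sum>k = 0..m. ((X - of_nat m - 1 + of_nat k) gchoose k) * ((Y - of_nat m - 1 + of_nat k) gchoose k) * T ^ k)"
proof -
  define u where "u = X - of_nat m"
  define v where "v = Y - of_nat m"
  define cu where "cu p = - ((-u) gchoose (m - p))" for p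
  define cv where "cv p = - ((-v) gchoose (m - p))" for p
  define Q where "Q w = Jm m * (Pm m * T0 w m)" for w :: 'a
  define G where "G = mat m m (\<lambda>(i,j). (if i = j then T ^ i else 0) + T ^ m * cu i * cv j)"
  have cJ: "(Jm m :: 'a mat) \<in> carrier_mat m m" and cP: "(Pm m :: 'a mat) \<in> carrier_mat m m"
    and cT0: "\<And>w. T0 w m \<in> carrier_mat m m" and cE: "\<And>w. Em w m \<in> carrier_mat m (Suc m)"
    and cD: "Dm T m \<in> carrier_mat (Suc m) (Suc m)" and cA: "\<And>w. Am w m \<in> carrier_mat m (Suc m)"
    and cG: "G \<in> carrier_mat m m"
    by (auto simp: Jm_def Pm_def T0_def Em_def Dm_def Am_def G_def)
  have cPT: "Pm m * T0 w m \<in> carrier_mat m m" for w :: 'a by (rule mult_carrier_mat[OF cP cT0])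
  have cQ: "Q w \<in> carrier_mat m m" for w :: 'a unfolding Q_def by (rule mult_carrier_mat[OF cJ cPT])
  have AQ: "Am w m = Q w * Em w m" for w :: 'a
  proof -
    have "Pm m * (T0 w m * Em w m) = (Pm m * T0 w m) * Em w m"
      using assoc_mult_mat[OF cP cT0 cE] by simp
    moreover have "Jm m * ((Pm m * T0 w m) * Em w m) = (Jm m * (Pm m * T0 w m)) * Em w m"
      using assoc_mult_mat[OF cJ cPT cE] by simp
    ultimately show ?thesis using Am_decomp[of w m] by (simp add: Q_def)
  qed
  have dQ: "det (Q w) = det (Jm m :: 'a mat)" for w :: 'a
    unfolding Q_def det_mult[OF cJ cPT] det_mult[OF cP cT0] det_Pm det_T0 by simp
  have Au: "Am u m $$ (i,k) = (X - of_nat (i+1)) gchoose k" if "i < m" "k < Suc m" for i k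
  proof -
    have "Am u m $$ (i,k) = (u + of_nat (m - 1 - i)) gchoose k" using that by (simp add: Am_def)
    then show ?thesis unfolding u_def shift_arg[OF that(1)] .
  qed
  have Av: "Am v m $$ (i,k) = (Y - of_nat (i+1)) gchoose k" if "i < m" "k < Suc m" for i k
  proof -
    have "Am v m $$ (i,k) = (v + of_nat (m - 1 - i)) gchoose k" using that by (simp add: Am_def)
    then show ?thesis unfolding v_def shift_arg[OF that(1)] .
  qed
  have Meq: "mat m m (\<lambda>(i,j). \<Sum>k = 0..m. ((X - of_nat (i+1)) gchoose k) * ((Y - of_nat (j+1)) gchoose k) * T ^ k)
     = Am u m * Dm T m * transpose_mat (Am v m)"
    unfolding ADB[OF cA cA]
  proof (rule eq_matI)
    fix i j assume "i < dim_row (mat m m (\<lambda>(i, j). \<Sum>k = 0..<Suc m. Am u m $$ (i, k) * T ^ k * Am v m $$ (j, k)))"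
      "j < dim_col (mat m m (\<lambda>(i, j). \<Sum>k = 0..<Suc m. Am u m $$ (i, k) * T ^ k * Am v m $$ (j, k)))"
    then have i: "i < m" and j: "j < m" by auto
    have "(\<Sum>k = 0..m. ((X - of_nat (i+1)) gchoose k) * ((Y - of_nat (j+1)) gchoose k) * T ^ k)
        = (\<Sum>k = 0..<Suc m. Am u m $$ (i, k) * T ^ k * Am v m $$ (j, k))"
      unfolding atLeastLessThanSuc_atLeastAtMost
    proof (rule sum.cong)
      fix k assume "k \<in> {0..m}"
      then have k: "k < Suc m" by auto
      show "((X - of_nat (i+1)) gchoose k) * ((Y - of_nat (j+1)) gchoose k) * T ^ k
         = Am u m $$ (i, k) * T ^ k * Am v m $$ (j, k)"
        using Au[OF i k] Av[OF j k] by (simp add: mult_ac)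
    qed simp
    then show "mat m m (\<lambda>(i,j). \<Sum>k = 0..m. ((X - of_nat (i+1)) gchoose k) * ((Y - of_nat (j+1)) gchoose k) * T ^ k) $$ (i,j)
      = mat m m (\<lambda>(i, j). \<Sum>k = 0..<Suc m. Am u m $$ (i, k) * T ^ k * Am v m $$ (j, k)) $$ (i,j)"
      using i j by simp
  qed auto
  have "Am u m * Dm T m * transpose_mat (Am v m) = Q u * (Em u m * Dm T m * transpose_mat (Em v m)) * transpose_mat (Q v)"
    unfolding AQ by (rule reassoc[OF cQ cE cD cQ cE])
  also have "Em u m * Dm T m * transpose_mat (Em v m) = G"
    unfolding G_eq cu_def cv_def G_def ..
  finally have M1: "Am u m * Dm T m * transpose_mat (Am v m) = Q u * G * transpose_mat (Q v)" .
  have cQT: "transpose_mat (Q v) \<in> carrier_mat m m" using cQ[of v] by simp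
  have M2: "det (Am u m * Dm T m * transpose_mat (Am v m)) = det (Q u) * det G * det (Q v)"
    unfolding M1 det_mult[OF mult_carrier_mat[OF cQ cG] cQT] det_mult[OF cQ cG] det_transpose[OF cQ] ..
  have dG: "det G = (\<Prod>i<m. T ^ i) * (1 + (\<Sum>i<m. T ^ m * cu i / T ^ i * cv i))"
    unfolding G_def using diag_rank_one_det[of m "\<lambda>i. T ^ i" "\<lambda>i. T ^ m * cu i" cv] T by simp
  have pr: "(\<Prod>i<m. T ^ i) = T ^ (m choose 2)"
    by (simp add: power_sum[symmetric] sum_lt_choose2)
  define g where "g k = ((-u) gchoose k) * ((-v) gchoose k) * T ^ k" for k
  have "(\<Sum>i<m. T ^ m * cu i / T ^ i * cv i) = (\<Sum>i<m. g (m - i))"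
  proof (rule sum.cong)
    fix i assume "i \<in> {..<m}"
    then have "i \<le> m" by auto
    then have "T ^ m / T ^ i = T ^ (m - i)" using T by (simp add: power_diff)
    moreover have "T ^ m * cu i / T ^ i * cv i = (T ^ m / T ^ i) * (cu i * cv i)"
      by (simp add: mult_ac)
    ultimately show "T ^ m * cu i / T ^ i * cv i = g (m - i)"
      by (simp add: g_def cu_def cv_def mult_ac)
  qed simp
  also have "\<dots> = (\<Sum>i<m. g (Suc i))"
  proof -
    have "(\<Sum>i<m. g (m - i)) = (\<Sum>i<m. (\<lambda>j. g (Suc j)) (m - Suc i))"
    proof (rule sum.cong)
      fix x assume "x \<in> {..<m}"
      then have "Suc (m - Suc x) = m - x" by auto
      then show "g (m - x) = (\<lambda>j. g (Suc j)) (m - Suc x)" by simp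
    qed simp
    also have "\<dots> = (\<Sum>i<m. g (Suc i))" by (rule sum.nat_diff_reindex)
    finally show ?thesis .
  qed
  finally have s0: "(\<Sum>i<m. T ^ m * cu i / T ^ i * cv i) = (\<Sum>i<m. g (Suc i))" .
  have "(\<Sum>k = 0..m. g k) = (\<Sum>k<Suc m. g k)"
    by (simp add: atLeast0AtMost lessThan_Suc_atMost)
  also have "\<dots> = g 0 + (\<Sum>i<m. g (Suc i))" by (rule sum.lessThan_Suc_shift)
  also have "g 0 = 1" by (simp add: g_def)
  finally have s1: "1 + (\<Sum>i<m. T ^ m * cu i / T ^ i * cv i) = (\<Sum>k = 0..m. g k)"
    using s0 by simp
  have s2: "g k = ((X - of_nat m - 1 + of_nat k) gchoose k) * ((Y - of_nat m - 1 + of_nat k) gchoose k) * T ^ k" for k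
  proof -
    have e0: "g k = ((-1) ^ k * (-1) ^ k) * ((u + of_nat k - 1) gchoose k) * ((v + of_nat k - 1) gchoose k) * T ^ k"
      unfolding g_def gbinomial_minus by (simp add: mult_ac)
    have e1: "(-1::'a) ^ k * (-1) ^ k = 1" by (simp flip: power_mult_distrib)
    have e2: "u + of_nat k - 1 = X - of_nat m - 1 + of_nat k" "v + of_nat k - 1 = Y - of_nat m - 1 + of_nat k"
      by (simp_all add: u_def v_def algebra_simps)
    show ?thesis unfolding e0 e1 e2 by simp
  qed
  have "det (mat m m (\<lambda>(i,j). \<Sum>k = 0..m. ((X - of_nat (i+1)) gchoose k) * ((Y - of_nat (j+1)) gchoose k) * T ^ k))
     = (det (Jm m :: 'a mat) * det (Jm m)) * (T ^ (m choose 2) * (\<Sum>k = 0..m. g k))"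
    unfolding Meq M2 dG pr s1 dQ by (simp add: mult_ac)
  also have "\<dots> = T ^ (m choose 2) * (\<Sum>k = 0..m. g k)" using det_Jm[where 'a='a, of m] by simp
  finally show ?thesis by (simp add: s2)
qed

instance fract :: ("{idom,ring_char_0}") field_char_0
proof
  show "inj (of_nat :: nat \<Rightarrow> 'a fract)"
    by (rule injI) (simp add: of_nat_fract eq_fract)
qed

definition fr :: "qxyt \<Rightarrow> qxyt fract" where "fr a = Fract a 1"

interpretation fr: comm_ring_hom fr
  by unfold_locales (simp_all add: fr_def One_fract_def Zero_fract_def)

lemma fr_inj: "fr a = fr b \<longleftrightarrow> a = b"
  by (simp add: fr_def eq_fract)

lemma constQ_mult: "constQ a * constQ b = constQ (a * b)"
  by (simp add: constQ_def)

lemma of_nat_constQ: "(of_nat n :: qxyt) = constQ (of_nat n)"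
  by (simp add: constQ_def of_nat_poly)

lemma fr_constQ_fact: "fr (constQ (1 / fact k)) = 1 / fact k"
proof -
  have "constQ (1 / fact k) * of_nat (fact k) = 1"
    by (simp add: of_nat_constQ constQ_mult) (simp add: constQ_def flip: one_pCons)
  then have "fr (constQ (1 / fact k)) * of_nat (fact k) = 1"
    by (metis fr.hom_mult fr.hom_one fr.hom_of_nat)
  then show ?thesis by (simp add: field_simps)
qed

lemma fr_pbinom: "fr (pbinom z k) = fr z gchoose k"
  unfolding pbinom_def gbinomial_prod_rev fr.hom_mult fr_constQ_fact fr.hom_prod
  by (simp add: fr.hom_minus fr.hom_of_nat atLeast0LessThan)

theorem lemma6:
  fixes m :: nat
  assumes "m \<ge> 1"
  shows "varT ^ (m choose 2) dvd det (matM m)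
       \<and> det (matM m) div varT ^ (m choose 2) =
           (\<Sum>k = 0..m. pbinom (varX - of_nat m - 1 + of_nat k) k
                        * pbinom (varY - of_nat m - 1 + of_nat k) k * varT ^ k)"
proof -
  define S where "S = (\<Sum>k = 0..m. pbinom (varX - of_nat m - 1 + of_nat k) k
                        * pbinom (varY - of_nat m - 1 + of_nat k) k * varT ^ k)"
  have vT: "varT \<noteq> 0" by (simp add: varT_def)
  have T: "fr varT \<noteq> 0" using vT fr_inj[of varT 0] by simp
  have map: "map_mat fr (matM m) = mat m m (\<lambda>(i,j). \<Sum>k = 0..m. ((fr varX - of_nat (i+1)) gchoose k)
       * ((fr varY - of_nat (j+1)) gchoose k) * fr varT ^ k)"
    by (rule eq_matI) (auto simp: matM_def fr.hom_sum fr.hom_mult fr.hom_power fr_pbinom fr.hom_minus fr.hom_of_nat fr.hom_add fr.hom_one)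
  have "fr (det (matM m)) = det (map_mat fr (matM m))" by simp
  also have "\<dots> = fr varT ^ (m choose 2) * (\<Sum>k = 0..m. ((fr varX - of_nat m - 1 + of_nat k) gchoose k)
       * ((fr varY - of_nat m - 1 + of_nat k) gchoose k) * fr varT ^ k)"
    unfolding map by (rule core[OF T])
  also have "\<dots> = fr (varT ^ (m choose 2) * S)"
    by (simp add: S_def fr.hom_sum fr.hom_mult fr.hom_power fr_pbinom fr.hom_minus fr.hom_add fr.hom_of_nat)
  finally have "det (matM m) = varT ^ (m choose 2) * S" by (simp add: fr_inj)
  moreover have "varT ^ (m choose 2) \<noteq> 0" using vT by simp
  ultimately show ?thesis unfolding S_def[symmetric] by simp
qed

end
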